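(* Let $G$ be a finite group and $p$ a prime. If $G$ contains a central nonidentity $p$-subgroup, then $\chi(\mathcal F^*_G)=1$ and $\chi(\mathcal L^*_G)=|G:O^pG|^{-1}$.
   Context: $N_G(H,K)=\{g\in G: g^{-1}Hg\le K\}$; $O^p(X)$ is the smallest normal subgroup of $X$ with $p$-group quotient. $\mathcal F^*_G$ and $\mathcal L^*_G$ have as objects the nonidentity $p$-subgroups of $G$, with $\mathcal F^*_G(H,K)=C_G(H)\backslash N_G(H,K)$ and $\mathcal L^*_G(H,K)=O^p(C_G(H))\backslash N_G(H,K)$, composition induced by multiplication. $\chi$ is Leinster's Euler characteristic: for a finite category $\mathcal C$, a weighting is $k^\bullet$ with $\sum_b|\mathcal C(a,b)|k^b=1$ for all $a$, a coweighting is $k_\bullet$ with $\sum_ak_a|\mathcal C(a,b)|=1$ for all $b$, and if both exist $\chi(\mathcal C)=\sum_bk^b=\sum_ak_a$. *)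

theory Defs
  imports "HOL-Algebra.Algebra" "HOL-Computational_Algebra.Primes"
begin

definition p_subgroup :: "('a, 'b) monoid_scheme \<Rightarrow> nat \<Rightarrow> 'a set \<Rightarrow> bool" where
  "p_subgroup G p H \<longleftrightarrow> subgroup H G \<and> finite H \<and> (\<exists>n. card H = p ^ n)"

definition nonid_p_subgroups :: "('a, 'b) monoid_scheme \<Rightarrow> nat \<Rightarrow> 'a set set" where
  "nonid_p_subgroups G p = {H. p_subgroup G p H \<and> H \<noteq> {\<one>\<^bsub>G\<^esub>}}"

definition centralizer :: "('a, 'b) monoid_scheme \<Rightarrow> 'a set \<Rightarrow> 'a set" where
  "centralizer G H = {g \<in> carrier G. \<forall>h\<in>H. g \<otimes>\<^bsub>G\<^esub> h = h \<otimes>\<^bsub>G\<^esub> g}"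

definition transporter :: "('a, 'b) monoid_scheme \<Rightarrow> 'a set \<Rightarrow> 'a set \<Rightarrow> 'a set" where
  "transporter G H K = {g \<in> carrier G. (\<forall>h\<in>H. inv\<^bsub>G\<^esub> g \<otimes>\<^bsub>G\<^esub> h \<otimes>\<^bsub>G\<^esub> g \<in> K)}"

(* O^p(Y) for a subgroup Y of G: the smallest normal subgroup of X with p-group quotient,
   i.e. the intersection of all such normal subgroups; the quotient Y/N is
   the set of cosets N g, g in Y *)
definition Op :: "('a, 'b) monoid_scheme \<Rightarrow> nat \<Rightarrow> 'a set \<Rightarrow> 'a set" where
  "Op G p Y = \<Inter> {N. normal N (G\<lparr>carrier := Y\<rparr>) \<and>
                     (\<exists>n. card ((\<lambda>g. N #>\<^bsub>G\<^esub> g) ` Y) = p ^ n)}"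

(* orbit set A \ B = {A g | g in B} (right cosets A g) *)
definition left_orbits :: "('a, 'b) monoid_scheme \<Rightarrow> 'a set \<Rightarrow> 'a set \<Rightarrow> 'a set set" where
  "left_orbits G A B = (\<lambda>g. A #>\<^bsub>G\<^esub> g) ` B"

definition F_hom :: "('a, 'b) monoid_scheme \<Rightarrow> 'a set \<Rightarrow> 'a set \<Rightarrow> 'a set set" where
  "F_hom G H K = left_orbits G (centralizer G H) (transporter G H K)"

definition L_hom :: "('a, 'b) monoid_scheme \<Rightarrow> nat \<Rightarrow> 'a set \<Rightarrow> 'a set \<Rightarrow> 'a set set" where
  "L_hom G p H K = left_orbits G (Op G p (centralizer G H)) (transporter G H K)"

(* Leinster weightings and coweightings of a finite category, given by its
   (finite) object set and Hm-sets *)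
definition is_weighting :: "'o set \<Rightarrow> ('o \<Rightarrow> 'o \<Rightarrow> 'm set) \<Rightarrow> ('o \<Rightarrow> real) \<Rightarrow> bool" where
  "is_weighting Ob Hm k \<longleftrightarrow> (\<forall>a\<in>Ob. (\<Sum>b\<in>Ob. real (card (Hm a b)) * k b) = 1)"

definition is_coweighting :: "'o set \<Rightarrow> ('o \<Rightarrow> 'o \<Rightarrow> 'm set) \<Rightarrow> ('o \<Rightarrow> real) \<Rightarrow> bool" where
  "is_coweighting Ob Hm k \<longleftrightarrow> (\<forall>b\<in>Ob. (\<Sum>a\<in>Ob. k a * real (card (Hm a b))) = 1)"

definition euler_char_is :: "'o set \<Rightarrow> ('o \<Rightarrow> 'o \<Rightarrow> 'm set) \<Rightarrow> real \<Rightarrow> bool" where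
  "euler_char_is Ob Hm x \<longleftrightarrow>
     (\<exists>k. is_weighting Ob Hm k \<and> (\<Sum>b\<in>Ob. k b) = x) \<and>
     (\<exists>k. is_coweighting Ob Hm k \<and> (\<Sum>a\<in>Ob. k a) = x)"

end

theory Submission
  imports Defs
begin


lemma triang:
  fixes R :: "'o \<Rightarrow> 'o \<Rightarrow> bool" and r :: "'o \<Rightarrow> int" and f :: "'o \<Rightarrow> real"
  assumes fin: "finite S" and refl: "\<forall>a\<in>S. R a a" and rank: "\<forall>a\<in>S. \<forall>b\<in>S. R a b \<longrightarrow> a \<noteq> b \<longrightarrow> r a < r b"
  shows "\<exists>k. \<forall>a\<in>S. (\<Sum>b\<in>S. if R a b then k b else 0) = f a"
  using fin
proof (induction S rule: finite_remove_induct)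
  case empty
  then show ?case by simp
next
  case (remove A)
  define x where "x = arg_min_on r A"
  have xA: "x \<in> A" using arg_min_if_finite(1)[OF remove(1,2)] x_def by simp
  have xmin: "\<not>(\<exists>y\<in>A. r y < r x)" using arg_min_if_finite(2)[OF remove(1,2)] x_def by simp
  obtain k where k: "\<forall>a\<in>A-{x}. (\<Sum>b\<in>A-{x}. if R a b then k b else 0) = f a"
    using remove(4)[OF xA] by blast
  define k' where "k' = k(x := f x - (\<Sum>b\<in>A-{x}. if R x b then k b else 0))"
  have eq: "(\<Sum>b\<in>A-{x}. if R a b then k' b else 0) = (\<Sum>b\<in>A-{x}. if R a b then k b else 0)" for a
    by (rule sum.cong) (auto simp: k'_def)
  have "(\<Sum>b\<in>A. if R a b then k' b else 0) = f a" if aA: "a \<in> A" for a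
  proof (cases "a = x")
    case True
    then show ?thesis
      using sum.remove[OF remove(1) xA, of "\<lambda>b. if R a b then k' b else 0"] eq[of a]
      using refl remove(3) xA by (auto simp add: k'_def)
  next
    case False
    have "\<not> R a x" using rank remove(3) aA xA False xmin by auto
    then show ?thesis
      using sum.remove[OF remove(1) xA, of "\<lambda>b. if R a b then k' b else 0"] eq[of a] k False aA
      by simp
  qed
  then show ?case by blast
qed

lemma triang_dual:
  fixes R :: "'o \<Rightarrow> 'o \<Rightarrow> bool" and r :: "'o \<Rightarrow> int" and f :: "'o \<Rightarrow> real"
  assumes fin: "finite S" and refl: "\<forall>a\<in>S. R a a" and rank: "\<forall>a\<in>S. \<forall>b\<in>S. R a b \<longrightarrow> a \<noteq> b \<longrightarrow> r a < r b"
  shows "\<exists>k. \<forall>b\<in>S. (\<Sum>a\<in>S. if R a b then k a else 0) = f b"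
  using triang[OF fin, of "\<lambda>a b. R b a" "\<lambda>a. - r a" f] rank refl by force



lemma cardsum: "finite A \<Longrightarrow> real (card {g\<in>A. Q g}) = (\<Sum>g\<in>A. if Q g then 1 else 0)"
  by (simp add: sum.inter_filter[symmetric])

lemma cardsum_mult: "finite A \<Longrightarrow> real (card {g\<in>A. Q g}) * (c::real) = (\<Sum>g\<in>A. if Q g then c else 0)"
  unfolding cardsum sum_distrib_right by (rule sum.cong) auto
lemma mult_cardsum: "finite A \<Longrightarrow> (c::real) * real (card {g\<in>A. Q g}) = (\<Sum>g\<in>A. if Q g then c else 0)"
  using cardsum_mult[of A Q c] by (simp add: mult.commute)

lemma mult_if0: "(c::real) * (if P then x else 0) = (if P then c * x else 0)" by simp
lemma if0_mult: "(if P then x else 0) * (c::real) = (if P then x * c else 0)" by simp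

lemma abstract_chi:
  fixes S :: "'g set set" and Gc :: "'x set" and Hom :: "'g set \<Rightarrow> 'g set \<Rightarrow> 'm set"
    and sg tg :: "'x \<Rightarrow> 'g set \<Rightarrow> 'g set" and W :: "'g set \<Rightarrow> real" and J :: "'g set \<Rightarrow> 'g set"
  assumes finS: "finite S" and finX: "finite Gc" and Xne: "Gc \<noteq> {}"
    and finmem: "\<forall>a\<in>S. finite a"
    and sgS: "\<forall>g\<in>Gc. \<forall>a\<in>S. sg g a \<in> S"
    and tgS: "\<forall>g\<in>Gc. \<forall>b\<in>S. tg g b \<in> S"
    and sgtg: "\<forall>g\<in>Gc. \<forall>a\<in>S. \<forall>b\<in>S. sg g a \<subseteq> b \<longleftrightarrow> a \<subseteq> tg g b"
    and Wpos: "\<forall>a\<in>S. W a > 0"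
    and Wsg: "\<forall>g\<in>Gc. \<forall>a\<in>S. W (sg g a) = W a"
    and hom: "\<forall>a\<in>S. \<forall>b\<in>S. real (card (Hom a b)) * W a = real (card {g\<in>Gc. sg g a \<subseteq> b})"
    and ZS: "Z \<in> S"
    and JS: "\<forall>a\<in>S. J a \<in> S \<and> W (J a) = W a \<and> (\<forall>b\<in>S. J a \<subseteq> b \<longleftrightarrow> a \<subseteq> b \<and> Z \<subseteq> b)"
  shows "euler_char_is S Hom (W Z / real (card Gc))"
proof -
  define n where "n = real (card Gc)"
  have npos: "n > 0" using finX Xne n_def by (simp add: card_gt_0_iff)
  have rank: "\<forall>a\<in>S. \<forall>b\<in>S. a \<subseteq> b \<longrightarrow> a \<noteq> b \<longrightarrow> int (card a) < int (card b)"
    using finmem by (auto intro: psubset_card_mono)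
  obtain k where k: "\<forall>a\<in>S. (\<Sum>b\<in>S. if a \<subseteq> b then k b else 0) = W a / n"
    using triang[OF finS, of "(\<subseteq>)" "\<lambda>a. int (card a)" "\<lambda>a. W a / n"] rank by auto
  have "\<exists>m. \<forall>b\<in>S. (\<Sum>a\<in>S. if a \<subseteq> b then m a else 0) = (1::real)"
    using triang_dual[OF finS, of "(\<subseteq>)" "\<lambda>a. int (card a)" "\<lambda>a. 1"] rank by auto
  then obtain m where m: "\<forall>b\<in>S. (\<Sum>a\<in>S. if a \<subseteq> b then m a else 0) = (1::real)" by blast
  have wt: "(\<Sum>b\<in>S. real (card (Hom a b)) * k b) = 1" if aS: "a \<in> S" for a
  proof -
    have "(\<Sum>b\<in>S. real (card (Hom a b)) * k b) = (\<Sum>b\<in>S. real (card {g\<in>Gc. sg g a \<subseteq> b}) * k b) / W a"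
    proof -
      have hb: "real (card (Hom a b)) = real (card {g\<in>Gc. sg g a \<subseteq> b}) / W a" if "b \<in> S" for b
      proof -
        have "W a \<noteq> 0" using Wpos aS by force
        then show ?thesis using hom aS that by (simp add: eq_divide_eq)
      qed
      show ?thesis unfolding sum_divide_distrib by (intro sum.cong) (auto simp: hb)
    qed
    also have "(\<Sum>b\<in>S. real (card {g\<in>Gc. sg g a \<subseteq> b}) * k b)
        = (\<Sum>b\<in>S. \<Sum>g\<in>Gc. if sg g a \<subseteq> b then k b else 0)"
      using finX by (simp only: cardsum_mult)
    also have "\<dots> = (\<Sum>g\<in>Gc. \<Sum>b\<in>S. if sg g a \<subseteq> b then k b else 0)"
      by (rule sum.swap)
    also have "\<dots> = (\<Sum>g\<in>Gc. W a / n)"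
      using k sgS Wsg aS by (intro sum.cong) auto
    also have "\<dots> = W a" using npos n_def by simp
    finally show ?thesis using Wpos aS by (auto split: if_splits)
  qed
  define k' where "k' a = W a * m a / n" for a
  have cwt: "(\<Sum>a\<in>S. k' a * real (card (Hom a b))) = 1" if bS: "b \<in> S" for b
  proof -
    have "(\<Sum>a\<in>S. k' a * real (card (Hom a b))) = (\<Sum>a\<in>S. m a * real (card {g\<in>Gc. sg g a \<subseteq> b})) / n"
    proof -
      have hb: "W a * real (card (Hom a b)) = real (card {g\<in>Gc. sg g a \<subseteq> b})" if "a \<in> S" for a
        using hom bS that by (simp add: mult.commute)
      show ?thesis unfolding sum_divide_distrib k'_def
        by (intro sum.cong) (auto simp: hb[symmetric])
    qed
    also have "(\<Sum>a\<in>S. m a * real (card {g\<in>Gc. sg g a \<subseteq> b}))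
        = (\<Sum>a\<in>S. \<Sum>g\<in>Gc. if sg g a \<subseteq> b then m a else 0)"
      using finX by (simp only: mult_cardsum)
    also have "\<dots> = (\<Sum>g\<in>Gc. \<Sum>a\<in>S. if sg g a \<subseteq> b then m a else 0)"
      by (rule sum.swap)
    also have "\<dots> = (\<Sum>g\<in>Gc. \<Sum>a\<in>S. if a \<subseteq> tg g b then m a else 0)"
      using sgtg bS by (intro sum.cong) auto
    also have "\<dots> = (\<Sum>g\<in>Gc. 1)"
      using m tgS bS by (intro sum.cong) auto
    also have "\<dots> = n" using n_def by simp
    finally show ?thesis using npos by simp
  qed
  define T where "T = (\<Sum>a\<in>S. m a * (W a / n))"
  have sk: "(\<Sum>b\<in>S. k b) = T"
  proof -
    have "(\<Sum>b\<in>S. k b) = (\<Sum>b\<in>S. k b * (\<Sum>a\<in>S. if a \<subseteq> b then m a else 0))"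
      using m by simp
    also have "\<dots> = (\<Sum>b\<in>S. \<Sum>a\<in>S. if a \<subseteq> b then m a * k b else 0)"
      by (intro sum.cong refl) (auto simp: sum_distrib_left intro!: sum.cong)
    also have "\<dots> = (\<Sum>a\<in>S. \<Sum>b\<in>S. if a \<subseteq> b then m a * k b else 0)"
      by (rule sum.swap)
    also have "\<dots> = (\<Sum>a\<in>S. m a * (\<Sum>b\<in>S. if a \<subseteq> b then k b else 0))"
      by (intro sum.cong refl) (simp add: sum_distrib_left mult_if0)
    also have "\<dots> = T" unfolding T_def using k by simp
    finally show ?thesis .
  qed
  have sk': "(\<Sum>a\<in>S. k' a) = T"
    unfolding T_def k'_def by (intro sum.cong) auto
  have TZ: "T = W Z / n"
  proof -
    have Jk: "W a / n = (\<Sum>b\<in>S. if a \<subseteq> b \<and> Z \<subseteq> b then k b else 0)" if aS: "a \<in> S" for a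
    proof -
      have J1: "J a \<in> S" "W (J a) = W a" "\<forall>b\<in>S. J a \<subseteq> b \<longleftrightarrow> a \<subseteq> b \<and> Z \<subseteq> b"
        using JS aS by auto
      have "W a / n = (\<Sum>b\<in>S. if J a \<subseteq> b then k b else 0)"
        using k J1(1) J1(2) by metis
      also have "\<dots> = (\<Sum>b\<in>S. if a \<subseteq> b \<and> Z \<subseteq> b then k b else 0)"
        using J1(3) by (intro sum.cong refl) simp
      finally show ?thesis .
    qed
    have "T = (\<Sum>a\<in>S. \<Sum>b\<in>S. if a \<subseteq> b \<and> Z \<subseteq> b then m a * k b else 0)"
      unfolding T_def by (intro sum.cong refl) (simp add: Jk sum_distrib_left mult_if0)
    also have "\<dots> = (\<Sum>b\<in>S. \<Sum>a\<in>S. if a \<subseteq> b \<and> Z \<subseteq> b then m a * k b else 0)"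
      by (rule sum.swap)
    also have "\<dots> = (\<Sum>b\<in>S. if Z \<subseteq> b then k b * (\<Sum>a\<in>S. if a \<subseteq> b then m a else 0) else 0)"
      by (intro sum.cong refl) (auto simp: sum_distrib_left intro!: sum.cong)
    also have "\<dots> = (\<Sum>b\<in>S. if Z \<subseteq> b then k b else 0)"
      using m by (intro sum.cong) auto
    also have "\<dots> = W Z / n" using k ZS by simp
    finally show ?thesis .
  qed
  show ?thesis
    unfolding euler_char_is_def is_weighting_def is_coweighting_def
  proof (intro conjI)
    show "\<exists>k. (\<forall>a\<in>S. (\<Sum>b\<in>S. real (card (Hom a b)) * k b) = 1) \<and> (\<Sum>b\<in>S. k b) = W Z / real (card Gc)"
      using wt sk TZ n_def by blast
    show "\<exists>k. (\<forall>b\<in>S. (\<Sum>a\<in>S. k a * real (card (Hom a b))) = 1) \<and> (\<Sum>a\<in>S. k a) = W Z / real (card Gc)"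
      using cwt sk' TZ n_def by blast
  qed
qed



definition cj1 :: "('a, 'b) monoid_scheme \<Rightarrow> 'a \<Rightarrow> 'a \<Rightarrow> 'a" where
  "cj1 G g h = inv\<^bsub>G\<^esub> g \<otimes>\<^bsub>G\<^esub> h \<otimes>\<^bsub>G\<^esub> g"

definition cj :: "('a, 'b) monoid_scheme \<Rightarrow> 'a \<Rightarrow> 'a set \<Rightarrow> 'a set" where
  "cj G g H = cj1 G g ` H"

context group begin

lemma rinv_assoc [simp]: "x \<in> carrier G \<Longrightarrow> y \<in> carrier G \<Longrightarrow> x \<otimes> (inv x \<otimes> y) = y"
  by (metis inv_closed m_assoc r_inv l_one)
lemma linv_assoc [simp]: "x \<in> carrier G \<Longrightarrow> y \<in> carrier G \<Longrightarrow> inv x \<otimes> (x \<otimes> y) = y"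
  by (metis inv_closed m_assoc l_inv l_one)

lemma cj1_closed [simp]: "g \<in> carrier G \<Longrightarrow> h \<in> carrier G \<Longrightarrow> cj1 G g h \<in> carrier G"
  by (simp add: cj1_def)
lemma cj1_mult: "g \<in> carrier G \<Longrightarrow> x \<in> carrier G \<Longrightarrow> y \<in> carrier G \<Longrightarrow>
    cj1 G g (x \<otimes> y) = cj1 G g x \<otimes> cj1 G g y"
  by (simp add: cj1_def m_assoc)
lemma cj1_one [simp]: "g \<in> carrier G \<Longrightarrow> cj1 G g \<one> = \<one>"
  by (simp add: cj1_def)
lemma cj1_inv: "g \<in> carrier G \<Longrightarrow> x \<in> carrier G \<Longrightarrow> cj1 G g (inv x) = inv (cj1 G g x)"
  by (simp add: cj1_def inv_mult_group m_assoc)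
lemma cj1_cj1_inv [simp]: "g \<in> carrier G \<Longrightarrow> h \<in> carrier G \<Longrightarrow> cj1 G (inv g) (cj1 G g h) = h"
  by (simp add: cj1_def m_assoc)
lemma cj1_inv_cj1 [simp]: "g \<in> carrier G \<Longrightarrow> h \<in> carrier G \<Longrightarrow> cj1 G g (cj1 G (inv g) h) = h"
  by (simp add: cj1_def m_assoc)
lemma cj1_inj: "g \<in> carrier G \<Longrightarrow> inj_on (cj1 G g) (carrier G)"
  by (metis cj1_cj1_inv inj_on_inverseI)
lemma cj1_mult_elt: "x \<in> carrier G \<Longrightarrow> g \<in> carrier G \<Longrightarrow> h \<in> carrier G \<Longrightarrow>
    cj1 G (x \<otimes> g) h = cj1 G g (cj1 G x h)"
  by (simp add: cj1_def inv_mult_group m_assoc)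

lemma cj_subgroup:
  assumes "subgroup H G" "g \<in> carrier G"
  shows "subgroup (cj G g H) G"
proof (rule subgroupI)
  have Hc: "H \<subseteq> carrier G" using assms(1) subgroup.subset by blast
  show "cj G g H \<subseteq> carrier G" using Hc assms(2) by (auto simp: cj_def)
  show "cj G g H \<noteq> {}" using subgroup.one_closed[OF assms(1)] by (auto simp: cj_def)
  fix a b assume a: "a \<in> cj G g H" and b: "b \<in> cj G g H"
  then obtain x y where xy: "x \<in> H" "y \<in> H" "a = cj1 G g x" "b = cj1 G g y" by (auto simp: cj_def)
  have xc: "x \<in> carrier G" "y \<in> carrier G" using xy Hc by auto
  show "inv a \<in> cj G g H"
    using xy xc assms subgroup.m_inv_closed[OF assms(1)]
    by (auto simp: cj_def cj1_inv[symmetric] intro!: image_eqI)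
  show "a \<otimes> b \<in> cj G g H"
    using xy xc assms subgroup.m_closed[OF assms(1)]
    by (auto simp: cj_def cj1_mult[symmetric] intro!: image_eqI)
qed

lemma cj_subset: "H \<subseteq> carrier G \<Longrightarrow> g \<in> carrier G \<Longrightarrow> cj G g H \<subseteq> carrier G"
  by (auto simp: cj_def)

lemma card_cj: "H \<subseteq> carrier G \<Longrightarrow> g \<in> carrier G \<Longrightarrow> card (cj G g H) = card H"
  unfolding cj_def by (rule card_image) (meson cj1_inj inj_on_subset)

lemma cj_cj_inv [simp]: assumes "H \<subseteq> carrier G" "g \<in> carrier G" shows "cj G (inv g) (cj G g H) = H"
proof -
  have "(\<lambda>x. cj1 G (inv g) (cj1 G g x)) ` H = id ` H"
    using assms by (intro image_cong) auto
  then show ?thesis unfolding cj_def image_image by simp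
qed

lemma cj_inv_cj [simp]: assumes "H \<subseteq> carrier G" "g \<in> carrier G" shows "cj G g (cj G (inv g) H) = H"
proof -
  have "(\<lambda>x. cj1 G g (cj1 G (inv g) x)) ` H = id ` H"
    using assms by (intro image_cong) auto
  then show ?thesis unfolding cj_def image_image by simp
qed

lemma cj_subset_iff:
  assumes "a \<subseteq> carrier G" "b \<subseteq> carrier G" "g \<in> carrier G"
  shows "cj G g a \<subseteq> b \<longleftrightarrow> a \<subseteq> cj G (inv g) b"
proof
  assume "cj G g a \<subseteq> b"
  then have "cj G (inv g) (cj G g a) \<subseteq> cj G (inv g) b" by (auto simp: cj_def)
  then show "a \<subseteq> cj G (inv g) b" using assms by simp
next
  assume "a \<subseteq> cj G (inv g) b"
  then have "cj G g a \<subseteq> cj G g (cj G (inv g) b)" by (auto simp: cj_def)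
  then show "cj G g a \<subseteq> b" using assms by simp
qed

lemma transporter_eq: "transporter G a b = {g \<in> carrier G. cj G g a \<subseteq> b}"
  by (auto simp: transporter_def cj_def cj1_def)


lemma centralizer_subgroup:
  assumes "H \<subseteq> carrier G" shows "subgroup (centralizer G H) G"
proof (rule subgroupI)
  show "centralizer G H \<subseteq> carrier G" by (auto simp: centralizer_def)
  show "centralizer G H \<noteq> {}" using assms by (auto simp: centralizer_def intro!: exI[of _ \<one>])
  fix a b assume a: "a \<in> centralizer G H" and b: "b \<in> centralizer G H"
  then have ac: "a \<in> carrier G" "b \<in> carrier G" and
    acom: "\<forall>h\<in>H. a \<otimes> h = h \<otimes> a" and bcom: "\<forall>h\<in>H. b \<otimes> h = h \<otimes> b"
    by (auto simp: centralizer_def)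
  show "inv a \<in> centralizer G H"
  proof -
    have "inv a \<otimes> h = h \<otimes> inv a" if h: "h \<in> H" for h
    proof -
      have hc: "h \<in> carrier G" using h assms by auto
      have "inv a \<otimes> h = inv a \<otimes> (h \<otimes> a) \<otimes> inv a" using hc ac by (simp add: m_assoc)
      also have "\<dots> = inv a \<otimes> (a \<otimes> h) \<otimes> inv a" using acom h by simp
      also have "\<dots> = h \<otimes> inv a" using hc ac by (simp add: m_assoc[symmetric])
      finally show ?thesis .
    qed
    then show ?thesis using ac by (auto simp: centralizer_def)
  qed
  show "a \<otimes> b \<in> centralizer G H"
  proof -
    have "a \<otimes> b \<otimes> h = h \<otimes> (a \<otimes> b)" if h: "h \<in> H" for h
    proof -
      have hc: "h \<in> carrier G" using h assms by auto
      have "a \<otimes> b \<otimes> h = a \<otimes> (h \<otimes> b)" using hc ac bcom h by (simp add: m_assoc)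
      also have "\<dots> = (a \<otimes> h) \<otimes> b" using hc ac by (simp add: m_assoc)
      also have "\<dots> = h \<otimes> (a \<otimes> b)" using hc ac acom h by (simp add: m_assoc)
      finally show ?thesis .
    qed
    then show ?thesis using ac by (auto simp: centralizer_def)
  qed
qed

lemma centralizer_cj:
  assumes Hc: "H \<subseteq> carrier G" and g: "g \<in> carrier G"
  shows "centralizer G (cj G g H) = cj G g (centralizer G H)"
proof
  show "centralizer G (cj G g H) \<subseteq> cj G g (centralizer G H)"
  proof
    fix x assume x: "x \<in> centralizer G (cj G g H)"
    then have xc: "x \<in> carrier G" and xcom: "\<forall>h\<in>H. x \<otimes> cj1 G g h = cj1 G g h \<otimes> x"
      by (auto simp: centralizer_def cj_def)
    define y where "y = cj1 G (inv g) x"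
    have yc: "y \<in> carrier G" and xy: "x = cj1 G g y" using xc g by (auto simp: y_def)
    have "y \<otimes> h = h \<otimes> y" if h: "h \<in> H" for h
    proof -
      have hc: "h \<in> carrier G" using h Hc by auto
      have "cj1 G g (y \<otimes> h) = cj1 G g (h \<otimes> y)"
        using xcom h xy yc hc g by (simp add: cj1_mult)
      then show ?thesis using cj1_inj[OF g] yc hc by (auto dest: inj_onD)
    qed
    then have "y \<in> centralizer G H" using yc by (auto simp: centralizer_def)
    then show "x \<in> cj G g (centralizer G H)" using xy by (auto simp: cj_def)
  qed
  show "cj G g (centralizer G H) \<subseteq> centralizer G (cj G g H)"
  proof
    fix x assume "x \<in> cj G g (centralizer G H)"
    then obtain y where y: "y \<in> centralizer G H" and xy: "x = cj1 G g y" by (auto simp: cj_def)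
    then have yc: "y \<in> carrier G" and ycom: "\<forall>h\<in>H. y \<otimes> h = h \<otimes> y" by (auto simp: centralizer_def)
    have "x \<otimes> cj1 G g h = cj1 G g h \<otimes> x" if h: "h \<in> H" for h
    proof -
      have hc: "h \<in> carrier G" using h Hc by auto
      show ?thesis using xy yc hc g ycom h by (simp add: cj1_mult[symmetric])
    qed
    then show "x \<in> centralizer G (cj G g H)" using xy yc g by (auto simp: centralizer_def cj_def)
  qed
qed

lemma normal_sub_iff:
  assumes Y: "subgroup Y G"
  shows "normal N (G\<lparr>carrier := Y\<rparr>) \<longleftrightarrow>
    subgroup N G \<and> N \<subseteq> Y \<and> (\<forall>x\<in>Y. \<forall>n\<in>N. x \<otimes> n \<otimes> inv x \<in> N)"
proof -
  interpret GY: group "G\<lparr>carrier := Y\<rparr>" using subgroup_imp_group[OF Y] .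
  have Yc: "Y \<subseteq> carrier G" using Y subgroup.subset by blast
  have sub: "subgroup N (G\<lparr>carrier := Y\<rparr>) \<longleftrightarrow> subgroup N G \<and> N \<subseteq> Y"
  proof
    assume "subgroup N (G\<lparr>carrier := Y\<rparr>)"
    then show "subgroup N G \<and> N \<subseteq> Y"
      using incl_subgroup[OF Y] subgroup.subset by force
  next
    assume "subgroup N G \<and> N \<subseteq> Y"
    then show "subgroup N (G\<lparr>carrier := Y\<rparr>)" using subgroup_incl[OF _ Y] by blast
  qed
  show ?thesis
    unfolding GY.normal_inv_iff sub
    using Y by (auto simp: m_inv_consistent)
qed

lemma Op_sub:
  assumes Y: "subgroup Y G"
  shows "subgroup (Op G p Y) G" "Op G p Y \<subseteq> Y"
proof -
  define F where "F = {N. normal N (G\<lparr>carrier := Y\<rparr>) \<and>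
                     (\<exists>n. card ((\<lambda>g. N #>\<^bsub>G\<^esub> g) ` Y) = p ^ n)}"
  have Yc: "Y \<subseteq> carrier G" using Y subgroup.subset by blast
  have "(\<lambda>g. Y #> g) ` Y = {Y}"
    using subgroup.rcos_const[OF Y is_group] subgroup.one_closed[OF Y] by auto
  then have "Y \<in> F" unfolding F_def normal_sub_iff[OF Y]
    using Y subgroup.m_closed[OF Y] subgroup.m_inv_closed[OF Y]
    by (auto intro!: exI[of _ 0])
  moreover have "\<And>N. N \<in> F \<Longrightarrow> subgroup N G" unfolding F_def normal_sub_iff[OF Y] by blast
  ultimately show "subgroup (Op G p Y) G" "Op G p Y \<subseteq> Y"
    unfolding Op_def F_def[symmetric] using subgroups_Inter by auto
qed


lemma cj_rcos:
  assumes "N \<subseteq> carrier G" "g \<in> carrier G" "x \<in> carrier G"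
  shows "cj G g N #> cj1 G g x = cj G g (N #> x)"
proof
  show "cj G g N #> cj1 G g x \<subseteq> cj G g (N #> x)"
  proof
    fix y assume "y \<in> cj G g N #> cj1 G g x"
    then obtain h where h: "h \<in> N" "y = cj1 G g h \<otimes> cj1 G g x" by (auto simp: cj_def r_coset_def)
    then have "y = cj1 G g (h \<otimes> x)" using assms by (simp add: cj1_mult subset_iff)
    then show "y \<in> cj G g (N #> x)" using h by (auto simp: cj_def r_coset_def)
  qed
  show "cj G g (N #> x) \<subseteq> cj G g N #> cj1 G g x"
  proof
    fix y assume "y \<in> cj G g (N #> x)"
    then obtain h where h: "h \<in> N" "y = cj1 G g (h \<otimes> x)" by (auto simp: cj_def r_coset_def)
    then have "y = cj1 G g h \<otimes> cj1 G g x" using assms by (simp add: cj1_mult subset_iff)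
    then show "y \<in> cj G g N #> cj1 G g x" using h by (auto simp: cj_def r_coset_def)
  qed
qed

definition (in group) OpQ where
  "OpQ p Y N \<longleftrightarrow> normal N (G\<lparr>carrier := Y\<rparr>) \<and> (\<exists>n. card ((\<lambda>g. N #>\<^bsub>G\<^esub> g) ` Y) = p ^ n)"

lemma OpQ_cj:
  assumes Y: "subgroup Y G" and g: "g \<in> carrier G" and Q: "OpQ p Y N"
  shows "OpQ p (cj G g Y) (cj G g N)"
proof -
  have Yc: "Y \<subseteq> carrier G" using Y subgroup.subset by blast
  have Y': "subgroup (cj G g Y) G" using cj_subgroup[OF Y g] .
  have N: "subgroup N G" "N \<subseteq> Y" "\<forall>x\<in>Y. \<forall>n\<in>N. x \<otimes> n \<otimes> inv x \<in> N"
    using Q unfolding OpQ_def normal_sub_iff[OF Y] by auto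
  obtain k where k: "card ((\<lambda>x. N #> x) ` Y) = p ^ k" using Q unfolding OpQ_def by auto
  have Nc: "N \<subseteq> carrier G" using N Yc by auto
  have "normal (cj G g N) (G\<lparr>carrier := cj G g Y\<rparr>)"
    unfolding normal_sub_iff[OF Y']
  proof (intro conjI)
    show "subgroup (cj G g N) G" using cj_subgroup[OF N(1) g] .
    show "cj G g N \<subseteq> cj G g Y" using N(2) by (auto simp: cj_def)
    show "\<forall>x\<in>cj G g Y. \<forall>n\<in>cj G g N. x \<otimes> n \<otimes> inv x \<in> cj G g N"
    proof (intro ballI)
      fix x n assume "x \<in> cj G g Y" "n \<in> cj G g N"
      then obtain x' n' where x': "x' \<in> Y" "x = cj1 G g x'" and n': "n' \<in> N" "n = cj1 G g n'"
        by (auto simp: cj_def)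
      have c: "x' \<in> carrier G" "n' \<in> carrier G" using x' n' Yc Nc by auto
      have "x \<otimes> n \<otimes> inv x = cj1 G g (x' \<otimes> n' \<otimes> inv x')"
        using c g x' n' by (simp add: cj1_mult cj1_inv)
      moreover have "x' \<otimes> n' \<otimes> inv x' \<in> N" using N(3) x' n' by auto
      ultimately show "x \<otimes> n \<otimes> inv x \<in> cj G g N" by (auto simp: cj_def)
    qed
  qed
  moreover have "card ((\<lambda>x. cj G g N #> x) ` cj G g Y) = p ^ k"
  proof -
    have "(\<lambda>x. cj G g N #> x) ` cj G g Y = (cj G g) ` ((\<lambda>x. N #> x) ` Y)"
      unfolding cj_def[of G g Y] image_image using cj_rcos[OF Nc g] Yc
      by (intro image_cong) auto
    moreover have "inj_on (cj G g) ((\<lambda>x. N #> x) ` Y)"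
    proof -
      have "inj_on (image (cj1 G g)) (Pow (carrier G))"
        using inj_on_image_Pow[OF cj1_inj[OF g]] .
      moreover have "(\<lambda>x. N #> x) ` Y \<subseteq> Pow (carrier G)"
        using r_coset_subset_G Nc Yc by auto
      ultimately show ?thesis unfolding cj_def[abs_def] by (rule inj_on_subset)
    qed
    ultimately show ?thesis using k card_image by metis
  qed
  ultimately show ?thesis unfolding OpQ_def by blast
qed

lemma Op_cj:
  assumes Y: "subgroup Y G" and g: "g \<in> carrier G"
  shows "Op G p (cj G g Y) = cj G g (Op G p Y)"
proof -
  have Yc: "Y \<subseteq> carrier G" using Y subgroup.subset by blast
  have Y': "subgroup (cj G g Y) G" using cj_subgroup[OF Y g] .
  have ig: "inv g \<in> carrier G" using g by simp
  have F: "{N. OpQ p (cj G g Y) N} = cj G g ` {N. OpQ p Y N}"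
  proof
    show "cj G g ` {N. OpQ p Y N} \<subseteq> {N. OpQ p (cj G g Y) N}" using OpQ_cj[OF Y g] by auto
    show "{N. OpQ p (cj G g Y) N} \<subseteq> cj G g ` {N. OpQ p Y N}"
    proof
      fix M assume "M \<in> {N. OpQ p (cj G g Y) N}"
      then have M: "OpQ p (cj G g Y) M" by simp
      have Mc: "M \<subseteq> carrier G"
        using M unfolding OpQ_def normal_sub_iff[OF Y'] using subgroup.subset by blast
      have "OpQ p (cj G (inv g) (cj G g Y)) (cj G (inv g) M)" using OpQ_cj[OF Y' ig M] .
      then have "OpQ p Y (cj G (inv g) M)" using Yc g by simp
      moreover have "M = cj G g (cj G (inv g) M)" using Mc g by simp
      ultimately show "M \<in> cj G g ` {N. OpQ p Y N}" by blast
    qed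
  qed
  have "Y \<in> {N. OpQ p Y N}"
  proof -
    have "(\<lambda>g. Y #> g) ` Y = {Y}"
      using subgroup.rcos_const[OF Y is_group] subgroup.one_closed[OF Y] by auto
    then show ?thesis unfolding OpQ_def mem_Collect_eq normal_sub_iff[OF Y]
      using Y subgroup.m_closed[OF Y] subgroup.m_inv_closed[OF Y]
      by (auto intro!: exI[of _ 0])
  qed
  moreover have sub: "\<forall>N\<in>{N. OpQ p Y N}. N \<subseteq> carrier G"
    unfolding OpQ_def normal_sub_iff[OF Y] using subgroup.subset by blast
  ultimately have "cj1 G g ` (\<Inter>N\<in>{N. OpQ p Y N}. N) = (\<Inter>N\<in>{N. OpQ p Y N}. cj1 G g ` N)"
    using image_INT[OF cj1_inj[OF g] sub, of Y] by simp
  moreover have "Op G p Y = \<Inter>{N. OpQ p Y N}" unfolding Op_def OpQ_def by simp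
  moreover have "Op G p (cj G g Y) = \<Inter>{N. OpQ p (cj G g Y) N}" unfolding Op_def OpQ_def by simp
  ultimately have e2: "\<Inter> (cj G g ` {N. OpQ p Y N}) = cj G g (Op G p Y)"
    unfolding cj_def[abs_def] by simp
  have "Op G p (cj G g Y) = \<Inter> (cj G g ` {N. OpQ p Y N})"
    unfolding Op_def OpQ_def[symmetric] F by simp
  then show ?thesis using e2 by simp
qed

lemma orbit_card:
  assumes A: "subgroup A G" and B: "B \<subseteq> carrier G" and fin: "finite (carrier G)"
    and cl: "\<forall>x\<in>A. \<forall>b\<in>B. x \<otimes> b \<in> B"
  shows "card (left_orbits G A B) * card A = card B"
proof -
  have Ac: "A \<subseteq> carrier G" using A subgroup.subset by blast
  define C where "C = (\<lambda>g. A #> g) ` B"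
  have finB: "finite B" using B fin finite_subset by blast
  have UC: "\<Union>C = B"
  proof
    show "\<Union>C \<subseteq> B" using cl B by (auto simp: C_def r_coset_def)
    show "B \<subseteq> \<Union>C" using rcos_self[OF _ A] B by (auto simp: C_def)
  qed
  have "card A * card C = card (\<Union>C)"
  proof (rule card_partition)
    show "finite C" using finB C_def by simp
    show "finite (\<Union>C)" using UC finB by simp
    show "\<And>c. c \<in> C \<Longrightarrow> card c = card A"
      using card_rcosets_equal[OF rcosetsI[OF Ac] Ac] B by (auto simp: C_def)
    show "\<And>c1 c2. c1 \<in> C \<Longrightarrow> c2 \<in> C \<Longrightarrow> c1 \<noteq> c2 \<Longrightarrow> c1 \<inter> c2 = {}"
    proof -
      fix c1 c2 assume "c1 \<in> C" "c2 \<in> C" "c1 \<noteq> c2"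
      moreover have "C \<subseteq> rcosets A" using rcosetsI[OF Ac] B by (auto simp: C_def)
      ultimately have "c1 \<in> rcosets A" "c2 \<in> rcosets A" "c1 \<noteq> c2" by auto
      then show "c1 \<inter> c2 = {}" using rcos_disjoint[OF A]
        unfolding pairwise_def disjnt_def by blast
    qed
  qed
  then show ?thesis using UC by (simp add: C_def left_orbits_def mult.commute)
qed


lemma join_lemma:
  assumes fin: "finite (carrier G)" and pr: "Factorial_Ring.prime (p::nat)"
    and P: "subgroup P G" and Pz: "P \<subseteq> centralizer G (carrier G)" and Pcard: "card P = p ^ i"
    and a: "subgroup a G" and acard: "card a = p ^ j"
  shows "subgroup (P <#> a) G" "\<exists>n. card (P <#> a) = p ^ n" "P \<subseteq> P <#> a"
    "\<And>b. subgroup b G \<Longrightarrow> (P <#> a \<subseteq> b \<longleftrightarrow> a \<subseteq> b \<and> P \<subseteq> b)"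
    "centralizer G (P <#> a) = centralizer G a"
proof -
  have Pc: "P \<subseteq> carrier G" using P subgroup.subset by blast
  have ac: "a \<subseteq> carrier G" using a subgroup.subset by blast
  have Pcomm: "\<And>x g. x \<in> P \<Longrightarrow> g \<in> carrier G \<Longrightarrow> x \<otimes> g = g \<otimes> x"
    using Pz by (auto simp: centralizer_def)
  have "normal P G" unfolding normal_inv_iff
  proof (intro conjI P ballI)
    fix x h assume x: "x \<in> carrier G" and h: "h \<in> P"
    have hc: "h \<in> carrier G" using h Pc by auto
    have "x \<otimes> h \<otimes> inv x = h \<otimes> x \<otimes> inv x" using Pcomm[OF h x] by simp
    also have "\<dots> = h" using hc x by (simp add: m_assoc)
    finally show "x \<otimes> h \<otimes> inv x \<in> P" using h by simp
  qed
  then show sub: "subgroup (P <#> a) G"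
    using second_isomorphism_grp.normal_set_mult_subgroup[of P G a] a
    unfolding second_isomorphism_grp_def second_isomorphism_grp_axioms_def by blast
  show PPa: "P \<subseteq> P <#> a"
  proof
    fix h assume "h \<in> P"
    then have "h \<otimes> \<one> \<in> P <#> a" using subgroup.one_closed[OF a] unfolding set_mult_def by blast
    then show "h \<in> P <#> a" using \<open>h \<in> P\<close> Pc by auto
  qed
  have aPa: "a \<subseteq> P <#> a"
  proof
    fix h assume "h \<in> a"
    then have "\<one> \<otimes> h \<in> P <#> a" using subgroup.one_closed[OF P] unfolding set_mult_def by blast
    then show "h \<in> P <#> a" using \<open>h \<in> a\<close> ac by auto
  qed
  show "P <#> a \<subseteq> b \<longleftrightarrow> a \<subseteq> b \<and> P \<subseteq> b" if b: "subgroup b G" for b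
  proof
    assume "P <#> a \<subseteq> b" then show "a \<subseteq> b \<and> P \<subseteq> b" using PPa aPa by auto
  next
    assume "a \<subseteq> b \<and> P \<subseteq> b"
    then show "P <#> a \<subseteq> b" using subgroup.m_closed[OF b] unfolding set_mult_def by blast
  qed
  show "centralizer G (P <#> a) = centralizer G a"
  proof
    show "centralizer G (P <#> a) \<subseteq> centralizer G a" using aPa by (auto simp: centralizer_def)
    show "centralizer G a \<subseteq> centralizer G (P <#> a)"
    proof
      fix x assume x: "x \<in> centralizer G a"
      then have xc: "x \<in> carrier G" and xcom: "\<forall>k\<in>a. x \<otimes> k = k \<otimes> x" by (auto simp: centralizer_def)
      have "x \<otimes> (h \<otimes> k) = (h \<otimes> k) \<otimes> x" if "h \<in> P" "k \<in> a" for h k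
      proof -
        have c: "h \<in> carrier G" "k \<in> carrier G" using that Pc ac by auto
        have "x \<otimes> (h \<otimes> k) = (x \<otimes> h) \<otimes> k" using c xc by (simp add: m_assoc)
        also have "\<dots> = (h \<otimes> x) \<otimes> k" using Pcomm[OF that(1) xc] by simp
        also have "\<dots> = h \<otimes> (x \<otimes> k)" using c xc by (simp add: m_assoc)
        also have "\<dots> = h \<otimes> (k \<otimes> x)" using xcom that by simp
        also have "\<dots> = (h \<otimes> k) \<otimes> x" using c xc by (simp add: m_assoc)
        finally show ?thesis .
      qed
      then show "x \<in> centralizer G (P <#> a)" using xc unfolding centralizer_def set_mult_def by blast
    qed
  qed
  have PaC: "P <#> a \<subseteq> carrier G" using sub subgroup.subset by blast
  have o1: "card (left_orbits G P (P <#> a)) * card P = card (P <#> a)"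
  proof (rule orbit_card[OF P PaC fin])
    show "\<forall>x\<in>P. \<forall>b\<in>P <#> a. x \<otimes> b \<in> P <#> a"
    proof (intro ballI)
      fix x b assume x: "x \<in> P" and "b \<in> P <#> a"
      then obtain h k where hk: "h \<in> P" "k \<in> a" "b = h \<otimes> k" unfolding set_mult_def by blast
      have c: "h \<in> carrier G" "k \<in> carrier G" "x \<in> carrier G" using hk x Pc ac by auto
      have "x \<otimes> b = (x \<otimes> h) \<otimes> k" using hk c by (simp add: m_assoc)
      moreover have "x \<otimes> h \<in> P" using subgroup.m_closed[OF P x hk(1)] .
      ultimately show "x \<otimes> b \<in> P <#> a" using hk unfolding set_mult_def by blast
    qed
  qed
  have lo1: "left_orbits G P (P <#> a) = (\<lambda>y. P #> y) ` a"
  proof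
    show "left_orbits G P (P <#> a) \<subseteq> (\<lambda>y. P #> y) ` a"
    proof
      fix T assume "T \<in> left_orbits G P (P <#> a)"
      then obtain h k where hk: "h \<in> P" "k \<in> a" "T = P #> (h \<otimes> k)"
        unfolding left_orbits_def set_mult_def by blast
      have c: "h \<in> carrier G" "k \<in> carrier G" using hk Pc ac by auto
      have "T = (P #> h) #> k" using hk c Pc by (simp add: coset_mult_assoc)
      also have "\<dots> = P #> k" using subgroup.rcos_const[OF P is_group hk(1)] by simp
      finally show "T \<in> (\<lambda>y. P #> y) ` a" using hk by blast
    qed
    show "(\<lambda>y. P #> y) ` a \<subseteq> left_orbits G P (P <#> a)"
      using aPa unfolding left_orbits_def by blast
  qed
  have aP: "subgroup (a \<inter> P) G" using subgroups_Inter_pair[OF a P] .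
  have o2: "card (left_orbits G (a \<inter> P) a) * card (a \<inter> P) = card a"
    using orbit_card[OF aP ac fin] subgroup.m_closed[OF a] by blast
  have cosint: "(a \<inter> P) #> y = (P #> y) \<inter> a" if y: "y \<in> a" for y
  proof
    have yc: "y \<in> carrier G" using y ac by auto
    show "(a \<inter> P) #> y \<subseteq> (P #> y) \<inter> a"
      using y subgroup.m_closed[OF a] unfolding r_coset_def by blast
    show "(P #> y) \<inter> a \<subseteq> (a \<inter> P) #> y"
    proof
      fix x assume "x \<in> (P #> y) \<inter> a"
      then obtain h where h: "h \<in> P" "x = h \<otimes> y" "x \<in> a" unfolding r_coset_def by blast
      have hc: "h \<in> carrier G" using h Pc by auto
      have "h = x \<otimes> inv y" using h hc yc by (simp add: m_assoc)
      then have "h \<in> a" using h(3) y subgroup.m_closed[OF a] subgroup.m_inv_closed[OF a] by simp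
      then show "x \<in> (a \<inter> P) #> y" using h unfolding r_coset_def by blast
    qed
  qed
  have lo2: "left_orbits G (a \<inter> P) a = (\<lambda>T. T \<inter> a) ` ((\<lambda>y. P #> y) ` a)"
    unfolding left_orbits_def image_image using cosint by auto
  have inj: "inj_on (\<lambda>T. T \<inter> a) ((\<lambda>y. P #> y) ` a)"
  proof (rule inj_onI)
    fix T1 T2 assume "T1 \<in> (\<lambda>y. P #> y) ` a" "T2 \<in> (\<lambda>y. P #> y) ` a" and eq: "T1 \<inter> a = T2 \<inter> a"
    then obtain y1 y2 where y: "y1 \<in> a" "y2 \<in> a" "T1 = P #> y1" "T2 = P #> y2" by blast
    have yc: "y1 \<in> carrier G" "y2 \<in> carrier G" using y ac by auto
    have "y1 \<in> T1 \<inter> a" using rcos_self[OF yc(1) P] y by auto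
    then have "y1 \<in> P #> y2" using eq y by auto
    then have "P #> y2 = P #> y1" using repr_independence[OF _ yc(2) P] by blast
    then show "T1 = T2" using y by simp
  qed
  define m where "m = card ((\<lambda>y. P #> y) ` a)"
  have m2: "m * card (a \<inter> P) = p ^ j" using o2 lo2 card_image[OF inj] acard m_def by simp
  then have "m dvd p ^ j" by (metis dvd_triv_left)
  then obtain t where t: "m = p ^ t" using divides_primepow_nat[OF pr] by blast
  have "card (P <#> a) = p ^ (t + i)" using o1 lo1 m_def t Pcard by (simp add: power_add)
  then show "\<exists>n. card (P <#> a) = p ^ n" by blast
qed

end

context group begin

lemma cj1_centr:
  assumes x: "x \<in> centralizer G a" and h: "h \<in> a" and ac: "a \<subseteq> carrier G"
  shows "cj1 G x h = h"
proof -
  have xc: "x \<in> carrier G" and xh: "x \<otimes> h = h \<otimes> x" using x h by (auto simp: centralizer_def)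
  have hc: "h \<in> carrier G" using h ac by auto
  have "cj1 G x h = inv x \<otimes> (h \<otimes> x)" using xc hc by (simp add: cj1_def m_assoc)
  also have "\<dots> = inv x \<otimes> (x \<otimes> h)" using xh by simp
  also have "\<dots> = h" using xc hc by simp
  finally show ?thesis .
qed

lemma hom_card:
  assumes A: "subgroup A G" and AC: "A \<subseteq> centralizer G a" and ac: "a \<subseteq> carrier G" and fin: "finite (carrier G)"
  shows "card (left_orbits G A (transporter G a b)) * card A = card (transporter G a b)"
proof (rule orbit_card[OF A _ fin])
  show "transporter G a b \<subseteq> carrier G" by (auto simp: transporter_def)
  show "\<forall>x\<in>A. \<forall>g\<in>transporter G a b. x \<otimes> g \<in> transporter G a b"
  proof (intro ballI)
    fix x g assume x: "x \<in> A" and g: "g \<in> transporter G a b"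
    have xc: "x \<in> carrier G" using x A subgroup.subset by blast
    have gc: "g \<in> carrier G" and gb: "cj G g a \<subseteq> b" using g by (auto simp: transporter_eq)
    have "cj G (x \<otimes> g) a = cj G g a"
      unfolding cj_def
    proof (intro image_cong refl)
      fix h assume h: "h \<in> a"
      then have hc: "h \<in> carrier G" using ac by auto
      have "x \<in> centralizer G a" using x AC by auto
      then show "cj1 G (x \<otimes> g) h = cj1 G g h"
        using cj1_mult_elt[OF xc gc hc] cj1_centr[OF _ h ac] by simp
    qed
    then show "x \<otimes> g \<in> transporter G a b" using gb xc gc by (auto simp: transporter_eq)
  qed
qed

end

lemma (in group) main_lemma:
  assumes "finite (carrier G)" and "Factorial_Ring.prime p"
    and "\<exists>P. p_subgroup G p P \<and> P \<noteq> {\<one>\<^bsub>G\<^esub>} \<and> P \<subseteq> centralizer G (carrier G)"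
  shows "euler_char_is (nonid_p_subgroups G p) (F_hom G) 1
       \<and> euler_char_is (nonid_p_subgroups G p) (L_hom G p)
           (1 / (real (card (carrier G)) / real (card (Op G p (carrier G)))))"
proof -
  have fin: "finite (carrier G)" by fact
  have pr: "Factorial_Ring.prime p" by fact
  obtain P where P: "p_subgroup G p P" "P \<noteq> {\<one>}" and Pz: "P \<subseteq> centralizer G (carrier G)"
    using assms(3) by blast
  define S where "S = nonid_p_subgroups G p"
  have Smem: "a \<in> S \<longleftrightarrow> subgroup a G \<and> finite a \<and> (\<exists>n. card a = p ^ n) \<and> a \<noteq> {\<one>}" for a
    by (simp add: S_def nonid_p_subgroups_def p_subgroup_def)
  have Sc: "a \<subseteq> carrier G" if "a \<in> S" for a using that Smem subgroup.subset by blast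
  have finS: "finite S"
  proof (rule finite_subset)
    show "S \<subseteq> Pow (carrier G)" using Sc by auto
    show "finite (Pow (carrier G))" using fin by simp
  qed
  have finmem: "\<forall>a\<in>S. finite a" using Smem by blast
  have cjS: "cj G g a \<in> S" if g: "g \<in> carrier G" and a: "a \<in> S" for g a
  proof -
    have ac: "a \<subseteq> carrier G" using Sc a .
    have "cj G g a \<noteq> {\<one>}"
    proof
      assume "cj G g a = {\<one>}"
      then have "cj G (inv g) (cj G g a) = cj G (inv g) {\<one>}" by simp
      then have "a = cj G (inv g) {\<one>}" using cj_cj_inv[OF ac g] by simp
      then have "a = {\<one>}" using g by (simp add: cj_def)
      then show False using a Smem by blast
    qed
    then show ?thesis using a Smem cj_subgroup[of a g] g card_cj[OF ac g] by (simp add: cj_def)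
  qed
  have sS: "\<forall>g\<in>carrier G. \<forall>a\<in>S. cj G g a \<in> S" using cjS by blast
  have tS: "\<forall>g\<in>carrier G. \<forall>b\<in>S. cj G (inv g) b \<in> S" using cjS by simp
  have st: "\<forall>g\<in>carrier G. \<forall>a\<in>S. \<forall>b\<in>S. cj G g a \<subseteq> b \<longleftrightarrow> a \<subseteq> cj G (inv g) b"
  proof (intro ballI)
    fix g a b assume g: "g \<in> carrier G" and a: "a \<in> S" and b: "b \<in> S"
    show "cj G g a \<subseteq> b \<longleftrightarrow> a \<subseteq> cj G (inv g) b" by (rule cj_subset_iff[OF Sc[OF a] Sc[OF b] g])
  qed
  have PS: "P \<in> S" using P by (simp add: S_def nonid_p_subgroups_def)
  have Psub: "subgroup P G" and Pcard: "\<exists>i. card P = p ^ i" using P by (auto simp: p_subgroup_def)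
  obtain i where i: "card P = p ^ i" using Pcard by blast
  have CP: "centralizer G P = carrier G"
    using Pz by (auto simp: centralizer_def subset_iff)
  have Jfacts: "P <#> a \<in> S \<and> centralizer G (P <#> a) = centralizer G a
      \<and> (\<forall>b\<in>S. P <#> a \<subseteq> b \<longleftrightarrow> a \<subseteq> b \<and> P \<subseteq> b)" if a: "a \<in> S" for a
  proof -
    obtain j where j: "card a = p ^ j" using a Smem by blast
    have asub: "subgroup a G" using a Smem by blast
    note J = join_lemma[OF fin pr Psub Pz i asub j]
    have "P <#> a \<noteq> {\<one>}"
    proof
      assume "P <#> a = {\<one>}"
      then have "P \<subseteq> {\<one>}" using J(3) by simp
      then have "P = {\<one>}" using subgroup.one_closed[OF Psub] by blast
      then show False using P by simp
    qed
    moreover have "finite (P <#> a)" using J(1) fin subgroup.subset finite_subset by blast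
    ultimately have "P <#> a \<in> S" using J(1,2) Smem by blast
    moreover have "\<forall>b\<in>S. P <#> a \<subseteq> b \<longleftrightarrow> a \<subseteq> b \<and> P \<subseteq> b"
    proof
      fix b assume "b \<in> S"
      then have "subgroup b G" using Smem by blast
      then show "P <#> a \<subseteq> b \<longleftrightarrow> a \<subseteq> b \<and> P \<subseteq> b" by (rule J(4))
    qed
    ultimately show ?thesis using J(5) by blast
  qed
  have Cpos: "card (centralizer G a) > 0" if "a \<in> S" for a
  proof -
    have sg: "subgroup (centralizer G a) G" using centralizer_subgroup[OF Sc[OF that]] .
    have "finite (centralizer G a)" using fin subgroup.subset[OF sg] finite_subset by blast
    moreover have "\<one> \<in> centralizer G a" using subgroup.one_closed[OF sg] .
    ultimately show ?thesis using card_gt_0_iff by blast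
  qed
  have F: "euler_char_is S (F_hom G) (real (card (centralizer G P)) / real (card (carrier G)))"
  proof (rule abstract_chi[OF finS fin _ finmem sS tS st, of "\<lambda>a. real (card (centralizer G a))"])
    show "carrier G \<noteq> {}" by auto
    show "\<forall>a\<in>S. 0 < real (card (centralizer G a))" using Cpos by simp
    show "\<forall>g\<in>carrier G. \<forall>a\<in>S. real (card (centralizer G (cj G g a))) = real (card (centralizer G a))"
    proof (intro ballI)
      fix g a assume g: "g \<in> carrier G" and a: "a \<in> S"
      have "centralizer G a \<subseteq> carrier G" by (auto simp: centralizer_def)
      then show "real (card (centralizer G (cj G g a))) = real (card (centralizer G a))"
        using centralizer_cj[OF Sc[OF a] g] card_cj g by simp
    qed
    show "\<forall>a\<in>S. \<forall>b\<in>S. real (card (F_hom G a b)) * real (card (centralizer G a)) =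
        real (card {g \<in> carrier G. cj G g a \<subseteq> b})"
    proof (intro ballI)
      fix a b assume a: "a \<in> S" and b: "b \<in> S"
      have "card (left_orbits G (centralizer G a) (transporter G a b)) * card (centralizer G a) = card (transporter G a b)"
        by (rule hom_card[OF centralizer_subgroup[OF Sc[OF a]] subset_refl Sc[OF a] fin])
      then show "real (card (F_hom G a b)) * real (card (centralizer G a)) =
        real (card {g \<in> carrier G. cj G g a \<subseteq> b})"
        unfolding F_hom_def transporter_eq[symmetric] by (metis of_nat_mult)
    qed
    show "P \<in> S" by (rule PS)
    show "\<forall>a\<in>S. P <#> a \<in> S \<and> real (card (centralizer G (P <#> a))) = real (card (centralizer G a)) \<and>
        (\<forall>b\<in>S. (P <#> a \<subseteq> b) = (a \<subseteq> b \<and> P \<subseteq> b))"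
      using Jfacts by simp
  qed
  have Opfacts: "subgroup (Op G p (centralizer G a)) G \<and> Op G p (centralizer G a) \<subseteq> centralizer G a"
    if "a \<in> S" for a
    using Op_sub[OF centralizer_subgroup[OF Sc[OF that]]] by blast
  have L: "euler_char_is S (L_hom G p) (real (card (Op G p (centralizer G P)))  / real (card (carrier G)))"
  proof (rule abstract_chi[OF finS fin _ finmem sS tS st, of "\<lambda>a. real (card (Op G p (centralizer G a)))"])
    show "carrier G \<noteq> {}" by auto
    show "\<forall>a\<in>S. 0 < real (card (Op G p (centralizer G a)))"
    proof
      fix a assume a: "a \<in> S"
      have sg: "subgroup (Op G p (centralizer G a)) G" using Opfacts[OF a] by blast
      have "finite (Op G p (centralizer G a))" using finite_subset[OF subgroup.subset[OF sg] fin] .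
      moreover have "\<one> \<in> Op G p (centralizer G a)" using subgroup.one_closed[OF sg] .
      ultimately show "0 < real (card (Op G p (centralizer G a)))"
        using card_gt_0_iff by fastforce
    qed
    show "\<forall>g\<in>carrier G. \<forall>a\<in>S. real (card (Op G p (centralizer G (cj G g a)))) = real (card (Op G p (centralizer G a)))"
    proof (intro ballI)
      fix g a assume g: "g \<in> carrier G" and a: "a \<in> S"
      have "Op G p (centralizer G (cj G g a)) = cj G g (Op G p (centralizer G a))"
        using centralizer_cj[OF Sc[OF a] g] Op_cj[OF centralizer_subgroup[OF Sc[OF a]] g] by simp
      moreover have "Op G p (centralizer G a) \<subseteq> carrier G"
        using Opfacts[OF a] subgroup.subset by blast
      ultimately show "real (card (Op G p (centralizer G (cj G g a)))) = real (card (Op G p (centralizer G a)))"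
        using card_cj g by simp
    qed
    show "\<forall>a\<in>S. \<forall>b\<in>S. real (card (L_hom G p a b)) * real (card (Op G p (centralizer G a))) =
        real (card {g \<in> carrier G. cj G g a \<subseteq> b})"
    proof (intro ballI)
      fix a b assume a: "a \<in> S" and b: "b \<in> S"
      have "card (left_orbits G (Op G p (centralizer G a)) (transporter G a b)) * card (Op G p (centralizer G a)) = card (transporter G a b)"
        using Opfacts[OF a] by (intro hom_card[OF _ _ Sc[OF a] fin]) auto
      then show "real (card (L_hom G p a b)) * real (card (Op G p (centralizer G a))) =
        real (card {g \<in> carrier G. cj G g a \<subseteq> b})"
        unfolding L_hom_def transporter_eq[symmetric] by (metis of_nat_mult)
    qed
    show "P \<in> S" by (rule PS)
    show "\<forall>a\<in>S. P <#> a \<in> S \<and> real (card (Op G p (centralizer G (P <#> a)))) = real (card (Op G p (centralizer G a))) \<and>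
        (\<forall>b\<in>S. (P <#> a \<subseteq> b) = (a \<subseteq> b \<and> P \<subseteq> b))"
      using Jfacts by simp
  qed
  have cpos: "real (card (carrier G)) > 0" using fin one_closed by (auto simp: card_gt_0_iff)
  show ?thesis
  proof
    show "euler_char_is (nonid_p_subgroups G p) (F_hom G) 1"
      using F CP cpos S_def by simp
    show "euler_char_is (nonid_p_subgroups G p) (L_hom G p)
           (1 / (real (card (carrier G)) / real (card (Op G p (carrier G)))))"
      using L CP S_def by simp
  qed
qed

theorem proposition5p1:
  fixes G :: "('a, 'b) monoid_scheme" and p :: nat
  assumes "group G" and "finite (carrier G)" and "Factorial_Ring.prime p"
    and "\<exists>P. p_subgroup G p P \<and> P \<noteq> {\<one>\<^bsub>G\<^esub>} \<and> P \<subseteq> centralizer G (carrier G)"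
  shows "euler_char_is (nonid_p_subgroups G p) (F_hom G) 1
       \<and> euler_char_is (nonid_p_subgroups G p) (L_hom G p)
           (1 / (real (card (carrier G)) / real (card (Op G p (carrier G)))))"
  using group.main_lemma[OF assms(1) assms(2) assms(3) assms(4)] .

end
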